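(* Let $m\le k\le n$ be positive integers, $\mathbf a_1,\dots,\mathbf a_n\in\mathbb R^m$. For a multiset $\mathcal R$ with support in $[n]$ let $f(\mathcal R)=[\det(\sum_{i\in\mathcal R}\mathbf a_i\mathbf a_i^\top)]^{1/m}$ (sum with multiplicity), and let $w^*=\max\{[\det(\sum_{i\in[n]}x_i\mathbf a_i\mathbf a_i^\top)]^{1/m}:\sum_ix_i=k,\ \mathbf x\in\mathbb Z_+^n\}$ be the optimal value of the $D$-optimal design problem with repetitions. Let $\hat{\mathbf x}\in\mathbb Q_+^n$ be a rational optimal solution of the relaxation $\max\{[\det(\sum_{i\in[n]}x_i\mathbf a_i\mathbf a_i^\top)]^{1/m}:\sum_ix_i=k,\ \mathbf x\in\mathbb R_+^n\}$. Algorithm A outputs the random multiset $\mathcal S$ of $k$ independent draws from $[n]$, each equal to $i$ with probability $\hat x_i/k$. Algorithm B, for a positive integer $q$ with $q\hat x_i\in\mathbb Z_+$ for all $i$, forms a collection $\mathcal A_q$ of $qk$ distinct items of which exactly $q\hat x_i$ carry label $i$, chooses a uniformly random $k$-element subset of $\mathcal A_q$, and outputs the multiset $\mathcal S_q$ of labels of the chosen items. Then, for $\mathcal T\in\{\mathcal S,\mathcal S_q\}$: (i) $(\mathbb E[(f(\mathcal T))^m])^{1/m}\ge\frac1e w^*$; (ii) for any $\epsilon\in(0,1)$, if $k\ge\frac{m-1}{\epsilon}$, then $(\mathbb E[(f(\mathcal T))^m])^{1/m}\ge(1-\epsilon)w^*$.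
   Context: $[n]=\{1,\dots,n\}$, $\mathbb Q_+$ the nonnegative rationals, $\mathbb Z_+$ the nonnegative integers, $\mathbb R_+$ the nonnegative reals. *)

theory Defs
  imports "HOL-Analysis.Analysis" "HOL-Probability.Probability"
begin

definition outer :: "real ^ 'm \<Rightarrow> real ^ 'm ^ 'm" where
  "outer v = (\<chi> i j. v $ i * v $ j)"

definition wmat :: "nat \<Rightarrow> (nat \<Rightarrow> real ^ 'm) \<Rightarrow> (nat \<Rightarrow> real) \<Rightarrow> real ^ 'm ^ 'm" where
  "wmat n a x = (\<Sum>i\<in>{1..n}. x i *\<^sub>R outer (a i))"

definition msmat :: "(nat \<Rightarrow> real ^ 'm) \<Rightarrow> nat multiset \<Rightarrow> real ^ 'm ^ 'm" where
  "msmat a R = sum_mset (image_mset (\<lambda>i. outer (a i)) R)"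

definition fval :: "(nat \<Rightarrow> real ^ 'm) \<Rightarrow> nat multiset \<Rightarrow> real" where
  "fval a R = det (msmat a R) powr (1 / real CARD('m))"

definition obj :: "nat \<Rightarrow> (nat \<Rightarrow> real ^ 'm) \<Rightarrow> (nat \<Rightarrow> real) \<Rightarrow> real" where
  "obj n a x = det (wmat n a x) powr (1 / real CARD('m))"

definition wstar :: "nat \<Rightarrow> nat \<Rightarrow> (nat \<Rightarrow> real ^ 'm) \<Rightarrow> real" where
  "wstar n k a = Max ((\<lambda>x. obj n a (\<lambda>i. real (x i))) `
      {x :: nat \<Rightarrow> nat. (\<forall>i. i \<notin> {1..n} \<longrightarrow> x i = 0) \<and> (\<Sum>i\<in>{1..n}. x i) = k})"

definition drawA :: "nat \<Rightarrow> nat \<Rightarrow> (nat \<Rightarrow> real) \<Rightarrow> nat pmf" where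
  "drawA n k xh = embed_pmf (\<lambda>i. if i \<in> {1..n} then xh i / real k else 0)"

definition algA :: "nat \<Rightarrow> nat \<Rightarrow> (nat \<Rightarrow> real) \<Rightarrow> nat multiset pmf" where
  "algA n k xh = map_pmf mset (replicate_pmf k (drawA n k xh))"

definition itemsB :: "nat \<Rightarrow> nat \<Rightarrow> (nat \<Rightarrow> real) \<Rightarrow> (nat \<times> nat) set" where
  "itemsB n q xh = {(i, j). i \<in> {1..n} \<and> j < nat \<lfloor>real q * xh i\<rfloor>}"

definition algB :: "nat \<Rightarrow> nat \<Rightarrow> nat \<Rightarrow> (nat \<Rightarrow> real) \<Rightarrow> nat multiset pmf" where
  "algB n k q xh = map_pmf (\<lambda>T. image_mset fst (mset_set T))
      (pmf_of_set {T. T \<subseteq> itemsB n q xh \<and> card T = k})"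

end

theory Submission
  imports Defs
begin



lemma outer_row: "outer v $ i = v $ i *\<^sub>R v"
  by (simp add: outer_def vec_eq_iff)

lemma det_rows_sum_gen:
  fixes a :: "'n::finite \<Rightarrow> 'b \<Rightarrow> real^'n"
  assumes "finite S"
  shows "det (\<chi> i. sum (a i) S) = (\<Sum>f\<in>PiE UNIV (\<lambda>_. S). det (\<chi> i. a i (f i)))"
proof -
  have "det (\<chi> i. sum (a i) S) = (\<Sum>p\<in>{p. p permutes UNIV}. of_int (sign p) * (\<Prod>i\<in>UNIV. \<Sum>s\<in>S. a i s $ p i))"
    by (simp add: det_def sum_component)
  also have "\<dots> = (\<Sum>p\<in>{p. p permutes UNIV}. of_int (sign p) * (\<Sum>f\<in>PiE UNIV (\<lambda>_. S). \<Prod>i\<in>UNIV. a i (f i) $ p i))"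
    using assms by (simp add: prod_sum_PiE)
  also have "\<dots> = (\<Sum>p\<in>{p. p permutes UNIV}. \<Sum>f\<in>PiE UNIV (\<lambda>_. S). of_int (sign p) * (\<Prod>i\<in>UNIV. a i (f i) $ p i))"
    by (simp add: sum_distrib_left)
  also have "\<dots> = (\<Sum>f\<in>PiE UNIV (\<lambda>_. S). \<Sum>p\<in>{p. p permutes UNIV}. of_int (sign p) * (\<Prod>i\<in>UNIV. a i (f i) $ p i))"
    by (rule sum.swap)
  also have "\<dots> = (\<Sum>f\<in>PiE UNIV (\<lambda>_. S). det (\<chi> i. a i (f i)))"
    by (simp add: det_def)
  finally show ?thesis .
qed

definition hh :: "('n::finite \<Rightarrow> real^'n) \<Rightarrow> real" where
  "hh u = (\<Prod>i\<in>UNIV. u i $ i) * det (\<chi> i. u i)"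

lemma det_sum_outer:
  fixes v :: "'b \<Rightarrow> real^'n::finite"
  assumes "finite T"
  shows "det (\<Sum>s\<in>T. outer (v s)) = (\<Sum>f\<in>PiE UNIV (\<lambda>_. T). hh (v \<circ> f))"
proof -
  have "(\<Sum>s\<in>T. outer (v s)) = (\<chi> i. \<Sum>s\<in>T. v s $ i *\<^sub>R v s)"
    by (simp add: vec_eq_iff sum_component outer_row)
  then have "det (\<Sum>s\<in>T. outer (v s)) = (\<Sum>f\<in>PiE UNIV (\<lambda>_. T). det (\<chi> i. v (f i) $ i *\<^sub>R v (f i)))"
    using det_rows_sum_gen[OF assms, of "\<lambda>i s. v s $ i *\<^sub>R v s"] by simp
  also have "\<dots> = (\<Sum>f\<in>PiE UNIV (\<lambda>_. T). hh (v \<circ> f))"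
    using det_rows_mul[of "\<lambda>i. v (f i) $ i" "\<lambda>i. v (f i)" for f]
    by (simp add: hh_def scalar_mult_eq_scaleR)
  finally show ?thesis .
qed

lemma hh_noninj:
  assumes "\<not> inj f"
  shows "hh (v \<circ> f) = 0"
proof -
  from assms obtain i j where "i \<noteq> j" "f i = f j" unfolding inj_def by blast
  then have "det (\<chi> i. (v \<circ> f) i) = 0"
    by (intro det_identical_rows[of i j]) (auto simp: row_def vec_eq_iff)
  then show ?thesis by (simp add: hh_def)
qed

lemma hh_perm_sum:
  fixes u :: "'n::finite \<Rightarrow> real^'n"
  shows "(\<Sum>p\<in>{p. p permutes (UNIV::'n set)}. hh (u \<circ> p)) = det (\<chi> i. u i) ^ 2"
proof -
  let ?A = "(\<chi> i. u i) :: real^'n^'n"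
  have "(\<Sum>p\<in>{p. p permutes (UNIV::'n set)}. hh (u \<circ> p)) =
        (\<Sum>p\<in>{p. p permutes (UNIV::'n set)}. (of_int (sign p) * (\<Prod>i\<in>UNIV. transpose ?A $ i $ p i)) * det ?A)"
  proof (rule sum.cong)
    fix p assume "p \<in> {p. p permutes (UNIV::'n set)}"
    then have p: "p permutes (UNIV::'n set)" by simp
    have "det (\<chi> i. u (p i)) = of_int (sign p) * det ?A"
      using det_permute_rows[OF p, of ?A] by simp
    then show "hh (u \<circ> p) = (of_int (sign p) * (\<Prod>i\<in>UNIV. transpose ?A $ i $ p i)) * det ?A"
      by (simp add: hh_def transpose_def)
  qed simp
  also have "\<dots> = det (transpose ?A) * det ?A"
    by (simp add: det_def sum_distrib_right)
  also have "\<dots> = det ?A ^ 2" by (simp add: power2_eq_square)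
  finally show ?thesis .
qed

lemma det_sum_outer_nonneg:
  fixes v :: "'b \<Rightarrow> real^'n::finite"
  assumes T: "finite T"
  shows "0 \<le> det (\<Sum>s\<in>T. outer (v s))"
proof -
  let ?F = "PiE (UNIV::'n set) (\<lambda>_. T)"
  let ?P = "{p. p permutes (UNIV::'n set)}"
  have inv: "(\<Sum>f\<in>?F. hh (v \<circ> f)) = (\<Sum>f\<in>?F. hh (v \<circ> f \<circ> p))" if p: "p permutes UNIV" for p
  proof (rule sum.reindex_bij_witness[where j="\<lambda>f. f \<circ> inv p" and i="\<lambda>f. f \<circ> p"])
    show "\<And>f. f \<in> ?F \<Longrightarrow> f \<circ> p \<circ> inv p = f" using p
      by (simp add: comp_assoc permutes_inv_o)
    show "\<And>f. f \<in> ?F \<Longrightarrow> f \<circ> inv p \<circ> p = f" using p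
      by (simp add: comp_assoc permutes_inv_o)
  qed (auto simp: comp_assoc permutes_inv_o[OF p])
  have "real (card ?P) * det (\<Sum>s\<in>T. outer (v s)) = (\<Sum>p\<in>?P. \<Sum>f\<in>?F. hh (v \<circ> f))"
    by (simp add: det_sum_outer[OF T])
  also have "\<dots> = (\<Sum>p\<in>?P. \<Sum>f\<in>?F. hh (v \<circ> f \<circ> p))"
    by (rule sum.cong[OF refl]) (simp add: inv)
  also have "\<dots> = (\<Sum>f\<in>?F. \<Sum>p\<in>?P. hh ((v \<circ> f) \<circ> p))"
    by (rule sum.swap)
  also have "\<dots> = (\<Sum>f\<in>?F. det (\<chi> i. (v \<circ> f) i) ^ 2)"
    by (simp only: hh_perm_sum)
  also have "\<dots> \<ge> 0" by (intro sum_nonneg) auto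
  finally have "0 \<le> real (card ?P) * det (\<Sum>s\<in>T. outer (v s))" .
  moreover have "card ?P > 0"
    using card_permutations[of "UNIV::'n set" "CARD('n)"] by simp
  ultimately show ?thesis
    by (metis of_nat_0_less_iff zero_le_mult_iff not_le)
qed




lemma det_two_rows_parallel:
  fixes A :: "real^'n::finite^'n"
  assumes ij: "i \<noteq> j" and ai: "A $ i = c *\<^sub>R v" and aj: "A $ j = d *\<^sub>R v"
  shows "det A = 0"
proof -
  define B where "B = ((\<chi> l. if l = i then v else if l = j then v else A $ l) :: real^'n^'n)"
  define s where "s = (\<lambda>l. if l = i then c else if l = j then d else (1::real))"
  have "row i B = row j B"
    using ij by (simp add: B_def row_def)
  then have B0: "det B = 0"
    using ij by (rule det_identical_rows[rotated])
  have "A $ l = s l *s B $ l" for l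
    using ij ai aj by (cases "l = i"; cases "l = j") (simp_all add: B_def s_def scalar_mult_eq_scaleR)
  then have "A = (\<chi> l. s l *s B $ l)"
    by (simp add: vec_eq_iff)
  then have "det A = prod s UNIV * det (\<chi> l. B $ l)"
    by (simp add: det_rows_mul)
  then show ?thesis using B0 by simp
qed

lemma det_split_rank1:
  fixes w z :: "'n::finite \<Rightarrow> real^'n" and c :: "'n \<Rightarrow> real" and v :: "real^'n"
  shows "det (\<chi> i. if i\<in>J then c i *\<^sub>R v + w i else z i) =
         det (\<chi> i. if i\<in>J then w i else z i) +
         (\<Sum>j\<in>J. det (\<chi> i. if i = j then c j *\<^sub>R v else if i\<in>J then w i else z i))"
proof -
  have "finite J" by simp
  then show ?thesis
  proof (induction J arbitrary: z rule: finite_induct)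
    case empty
    then show ?case by simp
  next
    case (insert j J z)
    let ?r = "\<lambda>i. if i\<in>J then c i *\<^sub>R v + w i else z i"
    have "det (\<chi> i. if i\<in>insert j J then c i *\<^sub>R v + w i else z i) =
          det (\<chi> i. if i = j then c i *\<^sub>R v + w i else ?r i)"
      by (intro arg_cong[where f=det] Cart_lambda_cong) auto
    also have "\<dots> = det (\<chi> i. if i = j then c i *\<^sub>R v else ?r i) + det (\<chi> i. if i = j then w i else ?r i)"
      by (rule det_row_add)
    also have "det (\<chi> i. if i = j then w i else ?r i) =
               det (\<chi> i. if i\<in>J then c i *\<^sub>R v + w i else (z(j := w j)) i)"
      using insert.hyps by (intro arg_cong[where f=det] Cart_lambda_cong) auto
    also have "\<dots> = det (\<chi> i. if i\<in>insert j J then w i else z i) +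
         (\<Sum>j'\<in>J. det (\<chi> i. if i = j' then c j' *\<^sub>R v else if i\<in>insert j J then w i else z i))"
      unfolding insert.IH
      using insert.hyps by (intro arg_cong2[where f="(+)"] arg_cong[where f=det] sum.cong refl Cart_lambda_cong)
         auto
    also have "det (\<chi> i. if i = j then c i *\<^sub>R v else ?r i) =
               det (\<chi> i. if i\<in>J then c i *\<^sub>R v + w i else (z(j := c j *\<^sub>R v)) i)"
      using insert.hyps by (intro arg_cong[where f=det] Cart_lambda_cong) auto
    also have "\<dots> = det (\<chi> i. if i = j then c j *\<^sub>R v else if i\<in>insert j J then w i else z i)"
    proof -
      have "det (\<chi> i. if i = j' then c j' *\<^sub>R v else if i\<in>J then w i else (z(j := c j *\<^sub>R v)) i) = 0"
        if "j' \<in> J" for j'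
        using that insert.hyps
        by (intro det_two_rows_parallel[of j' j _ "c j'" v "c j"]) auto
      then have "(\<Sum>j'\<in>J. det (\<chi> i. if i = j' then c j' *\<^sub>R v else if i\<in>J then w i else (z(j := c j *\<^sub>R v)) i)) = 0"
        by simp
      moreover have "det (\<chi> i. if i\<in>J then w i else (z(j := c j *\<^sub>R v)) i) =
           det (\<chi> i. if i = j then c j *\<^sub>R v else if i\<in>insert j J then w i else z i)"
        using insert.hyps by (intro arg_cong[where f=det] Cart_lambda_cong) auto
      ultimately show ?thesis unfolding insert.IH by simp
    qed
    finally show ?case
      using insert.hyps by (simp add: sum.insert algebra_simps)
  qed
qed




fun ff :: "nat \<Rightarrow> nat \<Rightarrow> real" where
  "ff k 0 = 1"
| "ff k (Suc c) = ff k c * (real k - real c)"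

lemma ff_0: "ff 0 c = (if c = 0 then 1 else 0)"
  by (induction c) auto

lemma ff_Suc_Suc: "ff (Suc k) (Suc c) = ff k (Suc c) + real (Suc c) * ff k c"
proof (induction c)
  case 0 then show ?case by simp
next
  case (Suc c)
  have "ff (Suc k) (Suc (Suc c)) = (ff k (Suc c) + real (Suc c) * ff k c) * (real k - real c)"
    using Suc by simp
  also have "\<dots> = ff k (Suc c) * (real k - real c) + real (Suc c) * ff k (Suc c)"
    by (simp add: algebra_simps)
  also have "\<dots> = ff k (Suc (Suc c)) + real (Suc (Suc c)) * ff k (Suc c)"
    by (simp add: algebra_simps)
  finally show ?case .
qed

lemma ff_rec: "ff (Suc k) c = ff k c + real c * ff k (c - 1)"
  by (cases c) (simp_all add: ff_Suc_Suc del: ff.simps(2))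

definition RL :: "(nat \<Rightarrow> real^'n) \<Rightarrow> nat list \<Rightarrow> real^'n^'n" where
  "RL a xs = sum_list (map (\<lambda>x. outer (a x)) xs)"

lemma alg_step:
  fixes a :: "nat \<Rightarrow> real^'n::finite" and px :: "nat \<Rightarrow> real" and w :: "'n \<Rightarrow> real^'n"
  assumes A: "finite A" and s1: "(\<Sum>x\<in>A. px x) = 1" and P: "P = (\<Sum>x\<in>A. px x *\<^sub>R outer (a x))"
  shows "(\<Sum>x\<in>A. px x * det (\<chi> i. if i\<in>J then a x $ i *\<^sub>R a x + w i else P $ i)) =
     det (\<chi> i. if i\<in>J then w i else P $ i) + (\<Sum>j\<in>J. det (\<chi> i. if i \<in> J - {j} then w i else P $ i))"
proof -
  let ?c = "\<lambda>i. if i\<in>J then w i else P $ i"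
  have row: "(\<Sum>x\<in>A. px x * det (\<chi> i. if i = j then a x $ j *\<^sub>R a x else ?c i))
             = det (\<chi> i. if i \<in> J - {j} then w i else P $ i)" if j: "j\<in>J" for j
  proof -
    have "(\<Sum>x\<in>A. px x * det (\<chi> i. if i = j then a x $ j *\<^sub>R a x else ?c i)) =
          (\<Sum>x\<in>A. det (\<chi> i. if i = j then px x *s (a x $ j *\<^sub>R a x) else ?c i))"
      using det_row_mul[of j "px x" "\<lambda>_. a x $ j *\<^sub>R a x" ?c for x] by simp
    also have "\<dots> = det (\<chi> i. if i = j then (\<Sum>x\<in>A. px x *s (a x $ j *\<^sub>R a x)) else ?c i)"
      using det_linear_row_sum[OF A, of j "\<lambda>i x. px x *s (a x $ j *\<^sub>R a x)" ?c] by simp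
    also have "(\<Sum>x\<in>A. px x *s (a x $ j *\<^sub>R a x)) = P $ j"
      by (simp add: P sum_component outer_row scalar_mult_eq_scaleR)
    also have "det (\<chi> i. if i = j then P $ j else ?c i) = det (\<chi> i. if i \<in> J - {j} then w i else P $ i)"
      by (intro arg_cong[where f=det] Cart_lambda_cong) auto
    finally show ?thesis .
  qed
  have "(\<Sum>x\<in>A. px x * det (\<chi> i. if i\<in>J then a x $ i *\<^sub>R a x + w i else P $ i)) =
        (\<Sum>x\<in>A. px x * (det (\<chi> i. if i\<in>J then w i else P $ i) +
           (\<Sum>j\<in>J. det (\<chi> i. if i = j then a x $ j *\<^sub>R a x else ?c i))))"
    using det_split_rank1[of J "\<lambda>i. a x $ i" "a x" w "\<lambda>i. P $ i" for x] by simp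
  also have "\<dots> = (\<Sum>x\<in>A. px x) * det (\<chi> i. if i\<in>J then w i else P $ i) +
        (\<Sum>j\<in>J. \<Sum>x\<in>A. px x * det (\<chi> i. if i = j then a x $ j *\<^sub>R a x else ?c i))"
    by (simp add: distrib_left sum.distrib sum_distrib_left sum_distrib_right sum.swap[of _ A J])
  also have "\<dots> = det (\<chi> i. if i\<in>J then w i else P $ i) + (\<Sum>j\<in>J. det (\<chi> i. if i \<in> J - {j} then w i else P $ i))"
    using row s1 by simp
  finally show ?thesis .
qed

lemma finite_set_replicate_pmf:
  assumes "finite (set_pmf p)"
  shows "finite (set_pmf (replicate_pmf k p))"
proof -
  have "set_pmf (replicate_pmf k p) \<subseteq> {xs. set xs \<subseteq> set_pmf p \<and> length xs = k}"
    by (auto simp: set_replicate_pmf)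
  then show ?thesis using finite_lists_length_eq[OF assms] finite_subset by blast
qed

lemma Q_lemma:
  fixes a :: "nat \<Rightarrow> real^'n::finite" and p :: "nat pmf"
  assumes A: "finite A" and pA: "set_pmf p \<subseteq> A" and P: "P = (\<Sum>x\<in>A. pmf p x *\<^sub>R outer (a x))"
  shows "measure_pmf.expectation (replicate_pmf k p) (\<lambda>xs. det (\<chi> i. if i\<in>J then RL a xs $ i else P $ i))
         = ff k (card J) * det P"
proof (induction k arbitrary: J)
  case 0
  show ?case
  proof (cases "J = {}")
    case True
    then show ?thesis by simp
  next
    case False
    then obtain j where j: "j \<in> J" by blast
    have "row j (\<chi> i. if i\<in>J then RL a [] $ i else P $ i) = 0"
      using j by (simp add: row_def RL_def vec_eq_iff)
    then have "det (\<chi> i. if i\<in>J then RL a [] $ i else P $ i) = 0"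
      by (rule det_zero_row)
    moreover have "card J \<noteq> 0" using False by simp
    ultimately show ?thesis by (simp add: ff_0)
  qed
next
  case (Suc k)
  have fp: "finite (set_pmf p)" using A pA finite_subset by blast
  have fr: "finite (set_pmf (replicate_pmf k p))" by (rule finite_set_replicate_pmf[OF fp])
  have int: "integrable (measure_pmf (replicate_pmf k p)) f" for f :: "nat list \<Rightarrow> real"
    by (rule integrable_measure_pmf_finite[OF fr])
  let ?h = "\<lambda>J xs. det (\<chi> i. if i\<in>J then RL a xs $ i else P $ i)"
  have rep: "replicate_pmf (Suc k) p = p \<bind> (\<lambda>x. map_pmf (Cons x) (replicate_pmf k p))"
    by (simp add: map_pmf_def)
  have "measure_pmf.expectation (replicate_pmf (Suc k) p) (?h J) =
        (\<Sum>x\<in>A. pmf p x *\<^sub>R measure_pmf.expectation (map_pmf (Cons x) (replicate_pmf k p)) (?h J))"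
    unfolding rep
    by (rule pmf_expectation_bind[OF A _ pA]) (simp add: fr)
  also have "\<dots> = (\<Sum>x\<in>A. pmf p x * measure_pmf.expectation (replicate_pmf k p) (\<lambda>ys. ?h J (x # ys)))"
    by simp
  also have "\<dots> = measure_pmf.expectation (replicate_pmf k p) (\<lambda>ys. \<Sum>x\<in>A. pmf p x * ?h J (x # ys))"
    by (subst Bochner_Integration.integral_sum) (simp_all add: int)
  also have "\<dots> = measure_pmf.expectation (replicate_pmf k p)
      (\<lambda>ys. ?h J ys + (\<Sum>j\<in>J. ?h (J - {j}) ys))"
  proof (rule Bochner_Integration.integral_cong[OF refl])
    fix ys
    have "?h J (x # ys) = det (\<chi> i. if i\<in>J then a x $ i *\<^sub>R a x + RL a ys $ i else P $ i)" for x
      by (intro arg_cong[where f=det] Cart_lambda_cong) (simp add: RL_def outer_row)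
    then show "(\<Sum>x\<in>A. pmf p x * ?h J (x # ys)) = ?h J ys + (\<Sum>j\<in>J. ?h (J - {j}) ys)"
      using alg_step[OF A sum_pmf_eq_1[OF A pA] P, of J "\<lambda>i. RL a ys $ i"] by simp
  qed
  also have "\<dots> = measure_pmf.expectation (replicate_pmf k p) (?h J) +
      (\<Sum>j\<in>J. measure_pmf.expectation (replicate_pmf k p) (?h (J - {j})))"
    by (simp only: Bochner_Integration.integral_add[OF int int] Bochner_Integration.integral_sum[OF int])
  also have "\<dots> = ff k (card J) * det P + (\<Sum>j\<in>J. ff k (card (J - {j})) * det P)"
    by (simp only: Suc.IH)
  also have "\<dots> = ff (Suc k) (card J) * det P"
    by (simp add: ff_rec algebra_simps)
  finally show ?case .
qed




lemma card_supersets: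
  assumes I: "finite I" and UI: "U \<subseteq> I" and Uk: "card U \<le> k"
  shows "card {T. T \<subseteq> I \<and> card T = k \<and> U \<subseteq> T} = (card I - card U) choose (k - card U)"
proof -
  have fU: "finite U" using I UI finite_subset by blast
  have "bij_betw (\<lambda>T. T - U) {T. T \<subseteq> I \<and> card T = k \<and> U \<subseteq> T} {T'. T' \<subseteq> I - U \<and> card T' = k - card U}"
  proof (rule bij_betw_byWitness[where f'="\<lambda>T'. T' \<union> U"])
    show "\<forall>a\<in>{T. T \<subseteq> I \<and> card T = k \<and> U \<subseteq> T}. a - U \<union> U = a" by auto
    show "\<forall>a'\<in>{T'. T' \<subseteq> I - U \<and> card T' = k - card U}. a' \<union> U - U = a'" by auto
    show "(\<lambda>T. T - U) ` {T. T \<subseteq> I \<and> card T = k \<and> U \<subseteq> T} \<subseteq> {T'. T' \<subseteq> I - U \<and> card T' = k - card U}"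
    proof clarify
      fix T assume T: "T \<subseteq> I" "U \<subseteq> T" "k = card T"
      have "finite T" using T I finite_subset by blast
      then show "T - U \<subseteq> I - U \<and> card (T - U) = card T - card U"
        using T by (auto simp: card_Diff_subset fU)
    qed
    show "(\<lambda>T'. T' \<union> U) ` {T'. T' \<subseteq> I - U \<and> card T' = k - card U} \<subseteq> {T. T \<subseteq> I \<and> card T = k \<and> U \<subseteq> T}"
    proof clarify
      fix T' assume T': "T' \<subseteq> I - U" "card T' = k - card U"
      have "finite T'" using T' I finite_subset by blast
      moreover have "T' \<inter> U = {}" using T' by auto
      ultimately have "card (T' \<union> U) = card T' + card U"
        using fU by (simp add: card_Un_disjoint)
      then show "T' \<union> U \<subseteq> I \<and> card (T' \<union> U) = k \<and> U \<subseteq> T' \<union> U"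
        using T' UI Uk by auto
    qed
  qed
  then have "card {T. T \<subseteq> I \<and> card T = k \<and> U \<subseteq> T} = card {T'. T' \<subseteq> I - U \<and> card T' = k - card U}"
    by (rule bij_betw_same_card)
  also have "\<dots> = card (I - U) choose (k - card U)"
    using I by (simp add: n_subsets)
  also have "card (I - U) = card I - card U"
    using UI fU by (simp add: card_Diff_subset)
  finally show ?thesis .
qed

lemma expB_sum:
  fixes v :: "'b \<Rightarrow> real^'n::finite"
  assumes I: "finite I" and k: "CARD('n) \<le> k"
  shows "(\<Sum>T\<in>{T. T \<subseteq> I \<and> card T = k}. det (\<Sum>s\<in>T. outer (v s)))
         = real ((card I - CARD('n)) choose (k - CARD('n))) * det (\<Sum>s\<in>I. outer (v s))"
proof -
  let ?S = "{T. T \<subseteq> I \<and> card T = k}"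
  let ?F = "PiE (UNIV::'n set) (\<lambda>_. I)"
  let ?C = "real ((card I - CARD('n)) choose (k - CARD('n)))"
  have fS: "finite ?S" using I by (simp add: finite_Collect_subsets)
  have fF: "finite ?F" using I by (simp add: finite_PiE)
  have "(\<Sum>T\<in>?S. det (\<Sum>s\<in>T. outer (v s))) = (\<Sum>T\<in>?S. \<Sum>f\<in>?F. if range f \<subseteq> T then hh (v \<circ> f) else 0)"
  proof (rule sum.cong[OF refl])
    fix T assume T: "T \<in> ?S"
    then have fT: "finite T" using I finite_subset by blast
    have eq: "PiE (UNIV::'n set) (\<lambda>_. T) = {f \<in> ?F. range f \<subseteq> T}"
      using T by (auto simp: PiE_UNIV_domain)
    show "det (\<Sum>s\<in>T. outer (v s)) = (\<Sum>f\<in>?F. if range f \<subseteq> T then hh (v \<circ> f) else 0)"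
      unfolding det_sum_outer[OF fT] eq by (rule sum.inter_filter[OF fF])
  qed
  also have "\<dots> = (\<Sum>f\<in>?F. \<Sum>T\<in>?S. if range f \<subseteq> T then hh (v \<circ> f) else 0)"
    by (rule sum.swap)
  also have "\<dots> = (\<Sum>f\<in>?F. ?C * hh (v \<circ> f))"
  proof (rule sum.cong[OF refl])
    fix f assume f: "f \<in> ?F"
    have "(\<Sum>T\<in>?S. if range f \<subseteq> T then hh (v \<circ> f) else 0) = (\<Sum>T\<in>{T\<in>?S. range f \<subseteq> T}. hh (v \<circ> f))"
      by (rule sum.inter_filter[OF fS, symmetric])
    also have "\<dots> = real (card {T\<in>?S. range f \<subseteq> T}) * hh (v \<circ> f)"
      by simp
    also have "\<dots> = ?C * hh (v \<circ> f)"
    proof (cases "inj f")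
      case True
      have "card (range f) = CARD('n)" using True by (simp add: card_image)
      moreover have "range f \<subseteq> I" using f by (auto simp: PiE_UNIV_domain)
      moreover have "{T\<in>?S. range f \<subseteq> T} = {T. T \<subseteq> I \<and> card T = k \<and> range f \<subseteq> T}" by auto
      ultimately show ?thesis
        using card_supersets[OF I, of "range f" k] k by simp
    next
      case False
      then show ?thesis by (simp add: hh_noninj)
    qed
    finally show "(\<Sum>T\<in>?S. if range f \<subseteq> T then hh (v \<circ> f) else 0) = ?C * hh (v \<circ> f)" .
  qed
  also have "\<dots> = ?C * det (\<Sum>s\<in>I. outer (v s))"
    by (simp add: det_sum_outer[OF I] sum_distrib_left PiE_UNIV_domain)
  finally show ?thesis .
qed

lemma pow_fact_le_exp:
  assumes "0 \<le> (x::real)"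
  shows "x ^ n / fact n \<le> exp x"
proof -
  have s: "(\<lambda>n. x^n /\<^sub>R fact n) sums exp x" by (rule exp_converges)
  have "(\<Sum>i\<in>{n}. x^i /\<^sub>R fact i) \<le> suminf (\<lambda>n. x^n /\<^sub>R fact n)"
    using assms by (intro sum_le_suminf[OF sums_summable[OF s]]) auto
  then show ?thesis using sums_unique[OF s] by (simp add: divide_inverse mult.commute)
qed

lemma ff_prod: "ff k c = (\<Prod>j<c. real k - real j)"
  by (induction c) (simp_all add: lessThan_Suc mult.commute)

lemma choose_Suc_rel: "Suc c * (k choose Suc c) = (k - c) * (k choose c)"
  using binomial_absorb_comp binomial_absorption by presburger

lemma ff_choose: "ff k c = real (k choose c) * fact c"
proof (induction c)
  case 0 then show ?case by simp
next
  case (Suc c)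
  have "ff k (Suc c) = real (k choose c) * fact c * (real k - real c)"
    using Suc by simp
  also have "\<dots> = real (k choose Suc c) * fact (Suc c)"
  proof (cases "c \<le> k")
    case True
    have "real (Suc c * (k choose Suc c)) = real ((k - c) * (k choose c))"
      by (simp only: choose_Suc_rel)
    then have e: "real (Suc c) * real (k choose Suc c) = (real k - real c) * real (k choose c)"
      by (simp only: of_nat_mult of_nat_diff[OF True])
    have "real (k choose c) * fact c * (real k - real c) = fact c * (real (Suc c) * real (k choose Suc c))"
      by (simp only: e mult_ac)
    then show ?thesis by (simp add: mult_ac)
  next
    case False
    then show ?thesis by (simp add: binomial_eq_0)
  qed
  finally show ?case .
qed




lemma det_scaleR_mat: "det (c *\<^sub>R (A :: real^'n::finite^'n)) = c ^ CARD('n) * det A"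
proof -
  have "c *\<^sub>R A = (\<chi> i. c *s A $ i)"
    by (simp add: vec_eq_iff scalar_mult_eq_scaleR)
  then show ?thesis by (simp add: det_rows_mul)
qed

lemma fval_pow_ge: "det (msmat a R) \<le> fval a R ^ CARD('n)" for a :: "nat \<Rightarrow> real^'n::finite"
proof (cases "det (msmat a R) > 0")
  case True
  have "fval a R ^ CARD('n) = det (msmat a R) powr (real CARD('n) * (1 / real CARD('n)))"
    unfolding fval_def using True by (simp add: powr_power)
  also have "\<dots> = det (msmat a R)" using True by simp
  finally show ?thesis by simp
next
  case False
  have "0 \<le> fval a R ^ CARD('n)" by (simp add: fval_def)
  then show ?thesis using False by linarith
qed

lemma final_step:
  fixes c g d E w :: real and m :: nat
  assumes c: "0 < c" and cg: "c ^ m \<le> g" and gE: "g * d \<le> E" and d: "0 \<le> d"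
    and w: "w \<le> d powr (1 / real m)" and m: "0 < m"
  shows "c * w \<le> E powr (1 / real m)"
proof -
  have "c ^ m * d \<le> g * d" using cg d by (simp add: mult_right_mono)
  then have cE: "c ^ m * d \<le> E" using gE by linarith
  have "(c ^ m * d) powr (1 / real m) = (c ^ m) powr (1 / real m) * d powr (1 / real m)"
    using c d by (simp add: powr_mult)
  also have "(c ^ m) powr (1 / real m) = c"
    using c m by (simp add: powr_realpow[symmetric] powr_powr)
  finally have "(c ^ m * d) powr (1 / real m) = c * d powr (1 / real m)" .
  moreover have "(c ^ m * d) powr (1 / real m) \<le> E powr (1 / real m)"
    using cE c d by (intro powr_mono2) auto
  moreover have "c * w \<le> c * d powr (1 / real m)" using w c by simp
  ultimately show ?thesis by linarith
qed

lemma gammaA_prod: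
  assumes "0 < k"
  shows "ff k m / real k ^ m = (\<Prod>j<m. (real k - real j) / real k)"
  by (simp add: ff_prod prod_dividef)

lemma gammaA_ge_e:
  assumes mk: "m \<le> k" and m: "0 < m"
  shows "(1 / exp 1) ^ m \<le> ff k m / real k ^ m"
proof -
  have k: "0 < k" using mk m by simp
  have "(\<Prod>j<m. (real m - real j) / real m) \<le> (\<Prod>j<m. (real k - real j) / real k)"
  proof (rule prod_mono)
    fix j assume j: "j \<in> {..<m}"
    have "real k * (real m - real j) \<le> real m * (real k - real j)"
      using mk by (simp add: algebra_simps mult_left_mono)
    then show "0 \<le> (real m - real j) / real m \<and> (real m - real j) / real m \<le> (real k - real j) / real k"
      using j k m by (auto simp: field_simps)
  qed
  then have g: "ff m m / real m ^ m \<le> ff k m / real k ^ m"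
    using k m by (simp add: gammaA_prod)
  have fm: "ff m m = fact m" by (simp add: ff_choose)
  have "real m ^ m / fact m \<le> exp (real m)" by (rule pow_fact_le_exp) simp
  then have "real m ^ m \<le> exp (real m) * fact m"
    by (simp add: pos_divide_le_eq)
  then have "1 / exp (real m) \<le> fact m / real m ^ m"
    using m by (simp add: field_simps)
  moreover have "(1 / exp 1) ^ m = 1 / exp (real m)"
    by (simp add: power_one_over exp_of_nat_mult[symmetric])
  ultimately show ?thesis using g fm by simp
qed

lemma gammaA_ge_eps:
  assumes mk: "m \<le> k" and m: "0 < m" and e: "0 < \<epsilon>" "\<epsilon> < 1" and ke: "real k \<ge> (real m - 1) / \<epsilon>"
  shows "(1 - \<epsilon>) ^ m \<le> ff k m / real k ^ m"
proof -
  have k: "0 < k" using mk m by simp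
  have "real m - 1 \<le> real k * \<epsilon>" using ke e by (simp add: pos_divide_le_eq)
  then have 1: "1 - \<epsilon> \<le> (real k - (real m - 1)) / real k"
    using k by (simp add: field_simps)
  have "((real k - (real m - 1)) / real k) ^ m = (\<Prod>j<m. (real k - (real m - 1)) / real k)"
    by simp
  also have "\<dots> \<le> (\<Prod>j<m. (real k - real j) / real k)"
  proof (rule prod_mono)
    fix j assume j: "j \<in> {..<m}"
    then show "0 \<le> (real k - (real m - 1)) / real k \<and> (real k - (real m - 1)) / real k \<le> (real k - real j) / real k"
      using mk k by (auto simp: divide_right_mono)
  qed
  finally have "((real k - (real m - 1)) / real k) ^ m \<le> ff k m / real k ^ m"
    using k by (simp add: gammaA_prod)
  moreover have "(1 - \<epsilon>) ^ m \<le> ((real k - (real m - 1)) / real k) ^ m"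
    using 1 e by (intro power_mono) auto
  ultimately show ?thesis by linarith
qed

lemma ff_le_pow:
  assumes "m \<le> N"
  shows "ff N m \<le> real N ^ m"
proof -
  have "(\<Prod>j<m. real N - real j) \<le> (\<Prod>j<m. real N)"
    using assms by (intro prod_mono) auto
  then show ?thesis by (simp add: ff_prod)
qed

lemma gammaB_ge:
  assumes mk: "m \<le> k" and q: "0 < q" and m: "0 < m"
  shows "ff k m / real k ^ m \<le> real ((q*k - m) choose (k - m)) * real q ^ m / real ((q*k) choose k)"
proof -
  let ?N = "q * k"
  have k: "0 < k" using mk m by simp
  have kN: "k \<le> ?N" using q by simp
  have Cpos: "0 < ?N choose k" using kN by simp
  have cm: "(?N choose k) * (k choose m) = (?N choose m) * ((?N - m) choose (k - m))"
    using choose_mult[OF mk kN] .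
  have "ff k m * real (?N choose k) = fact m * real (?N choose m) * real ((?N - m) choose (k - m))"
    using arg_cong[OF cm, of real] by (simp add: ff_choose algebra_simps)
  also have "\<dots> = ff ?N m * real ((?N - m) choose (k - m))"
    by (simp add: ff_choose)
  also have "\<dots> \<le> real ?N ^ m * real ((?N - m) choose (k - m))"
    using ff_le_pow[of m ?N] mk kN by (intro mult_right_mono) auto
  also have "\<dots> = real ((?N - m) choose (k - m)) * real q ^ m * real k ^ m"
    by (simp add: power_mult_distrib)
  finally have "ff k m * real (?N choose k) \<le> real ((?N - m) choose (k - m)) * real q ^ m * real k ^ m" .
  then show ?thesis
    using k Cpos by (simp add: field_simps)
qed




theorem theorem5:
  fixes a :: "nat \<Rightarrow> real ^ 'm" and n k q :: nat and xh :: "nat \<Rightarrow> real"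
  assumes mk: "CARD('m) \<le> k" and kn: "k \<le> n"
    and xh_rat: "\<forall>i\<in>{1..n}. xh i \<in> \<rat>"
    and xh_nonneg: "\<forall>i\<in>{1..n}. 0 \<le> xh i"
    and xh_sum: "(\<Sum>i\<in>{1..n}. xh i) = real k"
    and xh_opt: "\<forall>x :: nat \<Rightarrow> real. (\<forall>i\<in>{1..n}. 0 \<le> x i) \<and> (\<Sum>i\<in>{1..n}. x i) = real k
                   \<longrightarrow> obj n a x \<le> obj n a xh"
    and q_pos: "0 < q"
    and q_int: "\<forall>i\<in>{1..n}. \<exists>c :: nat. real q * xh i = real c"
  shows "\<forall>T \<in> {algA n k xh, algB n k q xh}.
     (measure_pmf.expectation T (\<lambda>R. fval a R ^ CARD('m))) powr (1 / real CARD('m))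
        \<ge> (1 / exp 1) * wstar n k a
   \<and> (\<forall>\<epsilon>::real. 0 < \<epsilon> \<and> \<epsilon> < 1 \<and> real k \<ge> (real CARD('m) - 1) / \<epsilon> \<longrightarrow>
        (measure_pmf.expectation T (\<lambda>R. fval a R ^ CARD('m))) powr (1 / real CARD('m))
          \<ge> (1 - \<epsilon>) * wstar n k a)"
proof -
  have m0: "0 < CARD('m)" by simp
  have k0: "0 < k" using mk m0 by linarith
  have n1: "1 \<le> n" using kn k0 by linarith
  define W where "W = wmat n a xh"
  define cnt where "cnt i = nat \<lfloor>real q * xh i\<rfloor>" for i
  have cnt: "real (cnt i) = real q * xh i" if "i \<in> {1..n}" for i
  proof -
    from bspec[OF q_int that] obtain c :: nat where c: "real q * xh i = real c" by (elim exE)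
    have "cnt i = c" unfolding cnt_def c by simp
    then show ?thesis using c by simp
  qed
  define I where "I = itemsB n q xh"
  have I_eq: "I = Sigma {1..n} (\<lambda>i. {..<cnt i})"
    unfolding I_def itemsB_def cnt_def by (simp add: set_eq_iff)
  have fI: "finite I" by (simp add: I_eq)
  have sumI: "(\<Sum>s\<in>I. outer (a (fst s))) = real q *\<^sub>R W"
  proof -
    have "(\<Sum>s\<in>I. outer (a (fst s))) = (\<Sum>i\<in>{1..n}. \<Sum>j\<in>{..<cnt i}. outer (a i))"
      unfolding I_eq by (subst sum.Sigma) (auto simp: split_beta)
    also have "\<dots> = (\<Sum>i\<in>{1..n}. (real q * xh i) *\<^sub>R outer (a i))"
    proof (rule sum.cong[OF refl])
      fix i assume i: "i \<in> {1..n}"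
      have "(\<Sum>j\<in>{..<cnt i}. outer (a i)) = real (card {..<cnt i}) *\<^sub>R outer (a i)"
        by (rule sum_constant_scaleR)
      then show "(\<Sum>j\<in>{..<cnt i}. outer (a i)) = (real q * xh i) *\<^sub>R outer (a i)"
        using cnt[OF i] by simp
    qed
    also have "\<dots> = real q *\<^sub>R W"
      by (simp add: W_def wmat_def scaleR_sum_right)
    finally show ?thesis .
  qed
  have cardI: "card I = q * k"
  proof -
    have "real (card I) = (\<Sum>i\<in>{1..n}. real (cnt i))"
      unfolding I_eq by (simp add: card_SigmaI)
    also have "\<dots> = (\<Sum>i\<in>{1..n}. real q * xh i)"
      by (rule sum.cong[OF refl]) (simp add: cnt)
    also have "\<dots> = real q * (\<Sum>i\<in>{1..n}. xh i)"
      by (rule sum_distrib_left[symmetric])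
    also have "\<dots> = real (q * k)"
      by (simp only: xh_sum of_nat_mult)
    finally show ?thesis by (simp only: of_nat_eq_iff)
  qed
  have detW: "0 \<le> det W"
  proof -
    have "0 \<le> det (\<Sum>s\<in>I. outer (a (fst s)))" by (rule det_sum_outer_nonneg[OF fI])
    then have "0 \<le> real q ^ CARD('m) * det W" by (simp add: sumI det_scaleR_mat)
    moreover have "0 < real q ^ CARD('m)" using q_pos by simp
    ultimately show ?thesis by (simp add: zero_le_mult_iff)
  qed
  have wst: "wstar n k a \<le> det W powr (1 / real CARD('m))"
  proof -
    let ?X = "{x :: nat \<Rightarrow> nat. (\<forall>i. i \<notin> {1..n} \<longrightarrow> x i = 0) \<and> (\<Sum>i\<in>{1..n}. x i) = k}"
    let ?f = "\<lambda>x. obj n a (\<lambda>i. real (x i))"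
    have xle: "x i \<le> k" if "x \<in> ?X" "i \<in> {1..n}" for x i
    proof -
      have "x i \<le> (\<Sum>i\<in>{1..n}. x i)" using that(2) by (intro member_le_sum) auto
      then show ?thesis using that(1) by simp
    qed
    have "?X \<subseteq> {x. \<forall>i. (i \<in> {1..n} \<longrightarrow> x i \<in> {0..k}) \<and> (i \<notin> {1..n} \<longrightarrow> x i = 0)}"
      using xle by auto
    then have fX: "finite ?X"
      using finite_set_of_finite_funs[of "{1..n}" "{0..k}" 0] finite_subset by blast
    have "(\<Sum>i\<in>{1..n}. (if i = 1 then k else 0)) = k" using n1 by (simp add: sum.delta)
    then have "(\<lambda>i. if i = 1 then k else 0) \<in> ?X" using n1 by simp
    then have neX: "?X \<noteq> {}" by (metis empty_iff)
    have "wstar n k a \<in> ?f ` ?X"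
      unfolding wstar_def by (rule Max_in) (use fX neX in auto)
    then obtain x where x: "x \<in> ?X" and wx: "wstar n k a = ?f x" by (rule imageE) auto
    have sx: "(\<Sum>i\<in>{1..n}. x i) = k" using x by simp
    have "(\<Sum>i\<in>{1..n}. real (x i)) = real k"
      unfolding sx[symmetric] by (rule of_nat_sum[symmetric])
    then have "?f x \<le> obj n a xh"
      using xh_opt by simp
    then show ?thesis using wx by (simp add: obj_def W_def)
  qed
  define p where "p = drawA n k xh"
  have pmf_p: "pmf p x = (if x \<in> {1..n} then xh x / real k else 0)" for x
    unfolding p_def drawA_def
  proof (rule pmf_embed_pmf)
    show "0 \<le> (if x \<in> {1..n} then xh x / real k else 0)" for x
      using xh_nonneg by auto
    have "(\<integral>\<^sup>+x. ennreal (if x \<in> {1..n} then xh x / real k else 0) \<partial>count_space UNIV)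
        = (\<Sum>x\<in>{1..n}. ennreal (if x \<in> {1..n} then xh x / real k else 0))"
      by (rule nn_integral_count_space') auto
    also have "\<dots> = (\<Sum>x\<in>{1..n}. ennreal (xh x / real k))"
      by (rule sum.cong) auto
    also have "\<dots> = ennreal (\<Sum>x\<in>{1..n}. xh x / real k)"
      using xh_nonneg by (subst sum_ennreal) auto
    also have "(\<Sum>x\<in>{1..n}. xh x / real k) = 1"
      using k0 xh_sum by (simp add: sum_divide_distrib[symmetric])
    finally show "(\<integral>\<^sup>+x. ennreal (if x \<in> {1..n} then xh x / real k else 0) \<partial>count_space UNIV) = 1"
      by simp
  qed
  have pA: "set_pmf p \<subseteq> {1..n}" using pmf_p by (auto simp: set_pmf_eq split: if_splits)
  have fp: "finite (set_pmf p)" using pA finite_subset by blast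
  have fr: "finite (set_pmf (replicate_pmf k p))" by (rule finite_set_replicate_pmf[OF fp])
  have P: "(1 / real k) *\<^sub>R W = (\<Sum>x\<in>{1..n}. pmf p x *\<^sub>R outer (a x))"
    by (simp add: pmf_p W_def wmat_def scaleR_sum_right)
  have Q: "measure_pmf.expectation (replicate_pmf k p) (\<lambda>xs. det (RL a xs))
        = ff k CARD('m) * ((1 / real k) ^ CARD('m) * det W)"
    using Q_lemma[OF finite_atLeastAtMost pA P, of k UNIV]
    by (simp add: det_scaleR_mat)
  have EA: "ff k CARD('m) / real k ^ CARD('m) * det W \<le>
      measure_pmf.expectation (algA n k xh) (\<lambda>R. fval a R ^ CARD('m))"
  proof -
    have "ff k CARD('m) / real k ^ CARD('m) * det W =
          measure_pmf.expectation (replicate_pmf k p) (\<lambda>xs. det (RL a xs))"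
      by (simp add: Q power_one_over)
    also have "\<dots> \<le> measure_pmf.expectation (replicate_pmf k p) (\<lambda>xs. fval a (mset xs) ^ CARD('m))"
    proof (rule integral_mono)
      show "integrable (measure_pmf (replicate_pmf k p)) (\<lambda>xs. det (RL a xs))"
        by (rule integrable_measure_pmf_finite[OF fr])
      show "integrable (measure_pmf (replicate_pmf k p)) (\<lambda>xs. fval a (mset xs) ^ CARD('m))"
        by (rule integrable_measure_pmf_finite[OF fr])
      fix xs
      have "msmat a (mset xs) = RL a xs"
        by (simp add: msmat_def RL_def sum_mset_sum_list flip: mset_map)
      then show "det (RL a xs) \<le> fval a (mset xs) ^ CARD('m)"
        using fval_pow_ge[of a "mset xs"] by simp
    qed
    also have "\<dots> = measure_pmf.expectation (algA n k xh) (\<lambda>R. fval a R ^ CARD('m))"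
      by (simp add: algA_def p_def)
    finally show ?thesis .
  qed
  define S where "S = {T. T \<subseteq> I \<and> card T = k}"
  have fS: "finite S" unfolding S_def using fI by (simp add: finite_Collect_subsets)
  have cardS: "card S = (q * k) choose k" unfolding S_def using n_subsets[OF fI] cardI by simp
  have cS: "0 < card S" unfolding cardS using q_pos by simp
  then have neS: "S \<noteq> {}" by auto
  have EB: "real ((q*k - CARD('m)) choose (k - CARD('m))) * real q ^ CARD('m) / real ((q*k) choose k) * det W
     \<le> measure_pmf.expectation (algB n k q xh) (\<lambda>R. fval a R ^ CARD('m))"
  proof -
    have e: "measure_pmf.expectation (algB n k q xh) (\<lambda>R. fval a R ^ CARD('m)) =
        (\<Sum>T\<in>S. fval a (image_mset fst (mset_set T)) ^ CARD('m)) / real (card S)"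
      by (simp add: algB_def I_def[symmetric] S_def[symmetric] integral_pmf_of_set[OF neS fS])
    have "(\<Sum>T\<in>S. det (\<Sum>s\<in>T. outer (a (fst s)))) \<le> (\<Sum>T\<in>S. fval a (image_mset fst (mset_set T)) ^ CARD('m))"
    proof (rule sum_mono)
      fix T assume "T \<in> S"
      have "msmat a (image_mset fst (mset_set T)) = (\<Sum>s\<in>T. outer (a (fst s)))"
        by (simp add: msmat_def multiset.map_comp sum_unfold_sum_mset comp_def)
      then show "det (\<Sum>s\<in>T. outer (a (fst s))) \<le> fval a (image_mset fst (mset_set T)) ^ CARD('m)"
        using fval_pow_ge[of a "image_mset fst (mset_set T)"] by simp
    qed
    moreover have "(\<Sum>T\<in>S. det (\<Sum>s\<in>T. outer (a (fst s)))) =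
        real ((q*k - CARD('m)) choose (k - CARD('m))) * (real q ^ CARD('m) * det W)"
      unfolding S_def using expB_sum[OF fI mk, of "\<lambda>s. a (fst s)"]
      by (simp add: cardI sumI det_scaleR_mat)
    ultimately show ?thesis
      unfolding e using cS by (simp add: cardS divide_right_mono mult_ac)
  qed
  have key: "(1 / exp 1) * wstar n k a \<le> E powr (1 / real CARD('m)) \<and>
      (\<forall>\<epsilon>::real. 0 < \<epsilon> \<and> \<epsilon> < 1 \<and> real k \<ge> (real CARD('m) - 1) / \<epsilon> \<longrightarrow>
        (1 - \<epsilon>) * wstar n k a \<le> E powr (1 / real CARD('m)))"
    if gE: "g * det W \<le> E" and g: "ff k CARD('m) / real k ^ CARD('m) \<le> g" for g E
  proof
    show "(1 / exp 1) * wstar n k a \<le> E powr (1 / real CARD('m))"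
      using gammaA_ge_e[OF mk m0] g
      by (intro final_step[OF _ _ gE detW wst m0]) auto
    show "\<forall>\<epsilon>::real. 0 < \<epsilon> \<and> \<epsilon> < 1 \<and> real k \<ge> (real CARD('m) - 1) / \<epsilon> \<longrightarrow>
        (1 - \<epsilon>) * wstar n k a \<le> E powr (1 / real CARD('m))"
    proof (intro allI impI)
      fix \<epsilon> :: real assume e: "0 < \<epsilon> \<and> \<epsilon> < 1 \<and> real k \<ge> (real CARD('m) - 1) / \<epsilon>"
      show "(1 - \<epsilon>) * wstar n k a \<le> E powr (1 / real CARD('m))"
        using gammaA_ge_eps[OF mk m0, of \<epsilon>] e g
        by (intro final_step[OF _ _ gE detW wst m0]) auto
    qed
  qed
  show ?thesis
  proof (intro ballI)
    fix T assume "T \<in> {algA n k xh, algB n k q xh}"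
    then consider "T = algA n k xh" | "T = algB n k q xh" by blast
    then show "(1 / exp 1) * wstar n k a \<le> (measure_pmf.expectation T (\<lambda>R. fval a R ^ CARD('m))) powr (1 / real CARD('m))
   \<and> (\<forall>\<epsilon>::real. 0 < \<epsilon> \<and> \<epsilon> < 1 \<and> real k \<ge> (real CARD('m) - 1) / \<epsilon> \<longrightarrow>
        (1 - \<epsilon>) * wstar n k a \<le> (measure_pmf.expectation T (\<lambda>R. fval a R ^ CARD('m))) powr (1 / real CARD('m)))"
    proof cases
      case 1
      then show ?thesis using key[OF EA order_refl] by simp
    next
      case 2
      then show ?thesis using key[OF EB gammaB_ge[OF mk q_pos m0]] by simp
    qed
  qed
qed


end
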